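(* Let $r\geq 1$ be an integer. Then for any $s\in\mathbb{R}$ with $s>1$, $$ t_r(s)=\sum_{j=0}^{r}\frac{(-1)^{r-j}}{2^{(r-j)s}}\,\zeta_j(s)\,\zeta^{\star}_{r-j}(s) \quad\text{and}\quad t^{\star}_r(s)=\sum_{j=0}^{r}\frac{(-1)^{r-j}}{2^{(r-j)s}}\,\zeta_{r-j}(s)\,\zeta^{\star}_{j}(s). $$
   Context: For an integer $r\geq 1$ and real $s>1$ define, with integer summation indices, $\zeta_r(s):=\sum_{n_1>\cdots>n_r>0}\prod_{i=1}^r n_i^{-s}$, $\zeta^{\star}_r(s):=\sum_{n_1\geq\cdots\geq n_r\geq 1}\prod_{i=1}^r n_i^{-s}$, $t_r(s):=\sum_{n_1>\cdots>n_r>0}\prod_{i=1}^r (2n_i-1)^{-s}$, $t^{\star}_r(s):=\sum_{n_1\geq\cdots\geq n_r\geq 1}\prod_{i=1}^r (2n_i-1)^{-s}$. For $r=0$ all four functions are set equal to $1$: $\zeta_0(s)=\zeta^{\star}_0(s)=t_0(s)=t^{\star}_0(s)=1$. *)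

theory Defs
  imports "HOL-Analysis.Analysis"
begin

definition strict_idx :: "nat \<Rightarrow> nat list set" where
  "strict_idx r = {ns. length ns = r \<and> sorted_wrt (>) ns \<and> (\<forall>n\<in>set ns. 0 < n)}"

definition weak_idx :: "nat \<Rightarrow> nat list set" where
  "weak_idx r = {ns. length ns = r \<and> sorted_wrt (\<ge>) ns \<and> (\<forall>n\<in>set ns. 0 < n)}"

definition mzeta :: "nat \<Rightarrow> real \<Rightarrow> real" where
  "mzeta r s = (\<Sum>\<^sub>\<infinity> ns \<in> strict_idx r. (\<Prod>n\<leftarrow>ns. real n powr (-s)))"

definition mzeta_star :: "nat \<Rightarrow> real \<Rightarrow> real" where
  "mzeta_star r s = (\<Sum>\<^sub>\<infinity> ns \<in> weak_idx r. (\<Prod>n\<leftarrow>ns. real n powr (-s)))"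

definition mt :: "nat \<Rightarrow> real \<Rightarrow> real" where
  "mt r s = (\<Sum>\<^sub>\<infinity> ns \<in> strict_idx r. (\<Prod>n\<leftarrow>ns. (2 * real n - 1) powr (-s)))"

definition mt_star :: "nat \<Rightarrow> real \<Rightarrow> real" where
  "mt_star r s = (\<Sum>\<^sub>\<infinity> ns \<in> weak_idx r. (\<Prod>n\<leftarrow>ns. (2 * real n - 1) powr (-s)))"

end

theory Submission
  imports Defs "HOL-Computational_Algebra.Formal_Power_Series"
begin

unbundle no vec_syntax
unbundle fps_syntax

definition SI :: "nat \<Rightarrow> nat \<Rightarrow> nat list set" where
  "SI N k = {ns \<in> strict_idx k. \<forall>n\<in>set ns. n \<le> N}"
definition WI :: "nat \<Rightarrow> nat \<Rightarrow> nat list set" where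
  "WI N k = {ns \<in> weak_idx k. \<forall>n\<in>set ns. n \<le> N}"
definition LI :: "nat \<Rightarrow> nat \<Rightarrow> nat list set" where
  "LI N k = {ns. length ns = k \<and> set ns \<subseteq> {1..N}}"

lemma LI_finite: "finite (LI N k)"
proof -
  have "LI N k = {xs. set xs \<subseteq> {1..N} \<and> length xs = k}" by (auto simp: LI_def)
  then show ?thesis using finite_lists_length_eq[of "{1..N}" k] by simp
qed

lemma SI_WI: "SI N k \<subseteq> WI N k"
  unfolding SI_def WI_def strict_idx_def weak_idx_def
  by (auto elim: sorted_wrt_mono_rel[rotated])

lemma WI_LI: "WI N k \<subseteq> LI N k"
  unfolding LI_def WI_def weak_idx_def by (auto simp: Suc_le_eq)

lemma SI_finite: "finite (SI N k)" using SI_WI WI_LI LI_finite finite_subset by metis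
lemma WI_finite: "finite (WI N k)" using WI_LI LI_finite finite_subset by metis

lemma SI_0: "SI N 0 = {[]}" by (auto simp: SI_def strict_idx_def)
lemma WI_0: "WI N 0 = {[]}" by (auto simp: WI_def weak_idx_def)
lemma SI_0S: "SI 0 (Suc k) = {}" by (auto simp: SI_def strict_idx_def length_Suc_conv)
lemma WI_0S: "WI 0 (Suc k) = {}" by (auto simp: WI_def weak_idx_def length_Suc_conv)

lemma SI_Suc: "SI (Suc N) (Suc k) = SI N (Suc k) \<union> Cons (Suc N) ` SI N k"
proof
  show "SI (Suc N) (Suc k) \<subseteq> SI N (Suc k) \<union> Cons (Suc N) ` SI N k"
  proof
    fix ns assume ns: "ns \<in> SI (Suc N) (Suc k)"
    then obtain x xs where nsx: "ns = x # xs" by (cases ns) (auto simp: SI_def strict_idx_def)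
    from ns nsx have len: "length xs = k" and sx: "\<forall>y\<in>set xs. y < x" and sw: "sorted_wrt (>) xs"
      and pos: "0 < x" "\<forall>y\<in>set xs. 0<y" and bx: "x \<le> Suc N"
      by (auto simp: SI_def strict_idx_def)
    show "ns \<in> SI N (Suc k) \<union> Cons (Suc N) ` SI N k"
    proof (cases "x = Suc N")
      case True
      then have "xs \<in> SI N k" using len sx sw pos by (auto simp: SI_def strict_idx_def less_Suc_eq_le)
      then show ?thesis using True nsx by blast
    next
      case False
      then have xN: "x \<le> N" using bx by simp
      have "\<forall>y\<in>set ns. y \<le> N" using nsx sx xN by auto
      then have "ns \<in> SI N (Suc k)" using ns by (simp add: SI_def)
      then show ?thesis by blast
    qed
  qed
next
  show "SI N (Suc k) \<union> Cons (Suc N) ` SI N k \<subseteq> SI (Suc N) (Suc k)"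
    by (auto simp: SI_def strict_idx_def less_Suc_eq_le le_Suc_eq)
qed

lemma WI_Suc: "WI (Suc N) (Suc k) = WI N (Suc k) \<union> Cons (Suc N) ` WI (Suc N) k"
proof
  show "WI (Suc N) (Suc k) \<subseteq> WI N (Suc k) \<union> Cons (Suc N) ` WI (Suc N) k"
  proof
    fix ns assume ns: "ns \<in> WI (Suc N) (Suc k)"
    then obtain x xs where nsx: "ns = x # xs" by (cases ns) (auto simp: WI_def weak_idx_def)
    from ns nsx have len: "length xs = k" and sx: "\<forall>y\<in>set xs. y \<le> x" and sw: "sorted_wrt (\<ge>) xs"
      and pos: "0 < x" "\<forall>y\<in>set xs. 0<y" and bx: "x \<le> Suc N"
      by (auto simp: WI_def weak_idx_def)
    show "ns \<in> WI N (Suc k) \<union> Cons (Suc N) ` WI (Suc N) k"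
    proof (cases "x = Suc N")
      case True
      then have "xs \<in> WI (Suc N) k" using len sx sw pos by (auto simp: WI_def weak_idx_def)
      then show ?thesis using True nsx by blast
    next
      case False
      then have xN: "x \<le> N" using bx by simp
      have "\<forall>y\<in>set ns. y \<le> N" using nsx sx xN by auto
      then have "ns \<in> WI N (Suc k)" using ns by (simp add: WI_def)
      then show ?thesis by blast
    qed
  qed
next
  show "WI N (Suc k) \<union> Cons (Suc N) ` WI (Suc N) k \<subseteq> WI (Suc N) (Suc k)"
    by (auto simp: WI_def weak_idx_def)
qed

lemma SI_disj: "SI N k' \<inter> Cons (Suc N) ` A = {}" by (auto simp: SI_def)
lemma WI_disj: "WI N k' \<inter> Cons (Suc N) ` A = {}" by (auto simp: WI_def)

definition Ef :: "(nat \<Rightarrow> real) \<Rightarrow> nat \<Rightarrow> nat \<Rightarrow> real" where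
  "Ef v N k = (\<Sum>ns\<in>SI N k. \<Prod>n\<leftarrow>ns. v n)"
definition Hf :: "(nat \<Rightarrow> real) \<Rightarrow> nat \<Rightarrow> nat \<Rightarrow> real" where
  "Hf v N k = (\<Sum>ns\<in>WI N k. \<Prod>n\<leftarrow>ns. v n)"

lemma Ef_0: "Ef v N 0 = 1" by (simp add: Ef_def SI_0)
lemma Hf_0: "Hf v N 0 = 1" by (simp add: Hf_def WI_0)
lemma Ef_0S: "Ef v 0 (Suc k) = 0" by (simp add: Ef_def SI_0S)
lemma Hf_0S: "Hf v 0 (Suc k) = 0" by (simp add: Hf_def WI_0S)

lemma Ef_Suc: "Ef v (Suc N) (Suc k) = Ef v N (Suc k) + v (Suc N) * Ef v N k"
proof -
  have "Ef v (Suc N) (Suc k) = Ef v N (Suc k) + (\<Sum>ns\<in>Cons (Suc N) ` SI N k. \<Prod>n\<leftarrow>ns. v n)"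
    unfolding Ef_def SI_Suc by (rule sum.union_disjoint) (simp_all add: SI_finite SI_disj)
  also have "(\<Sum>ns\<in>Cons (Suc N) ` SI N k. \<Prod>n\<leftarrow>ns. v n) = v (Suc N) * Ef v N k"
    by (subst sum.reindex) (auto simp: Ef_def sum_distrib_left)
  finally show ?thesis .
qed

lemma Hf_Suc: "Hf v (Suc N) (Suc k) = Hf v N (Suc k) + v (Suc N) * Hf v (Suc N) k"
proof -
  have "Hf v (Suc N) (Suc k) = Hf v N (Suc k) + (\<Sum>ns\<in>Cons (Suc N) ` WI (Suc N) k. \<Prod>n\<leftarrow>ns. v n)"
    unfolding Hf_def WI_Suc by (rule sum.union_disjoint) (simp_all add: WI_finite WI_disj)
  also have "(\<Sum>ns\<in>Cons (Suc N) ` WI (Suc N) k. \<Prod>n\<leftarrow>ns. v n) = v (Suc N) * Hf v (Suc N) k"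
    by (subst sum.reindex) (auto simp: Hf_def sum_distrib_left)
  finally show ?thesis .
qed

lemma prod_list_scale: fixes v :: "nat \<Rightarrow> real"
  shows "(\<Prod>n\<leftarrow>ns. c * v n) = c ^ length ns * (\<Prod>n\<leftarrow>ns. v n)"
  by (induction ns) (simp_all add: algebra_simps)

lemma Ef_scale: "Ef (\<lambda>n. c * v n) N k = c ^ k * Ef v N k"
  unfolding Ef_def sum_distrib_left
  by (rule sum.cong) (auto simp: prod_list_scale SI_def strict_idx_def)
lemma Hf_scale: "Hf (\<lambda>n. c * v n) N k = c ^ k * Hf v N k"
  unfolding Hf_def sum_distrib_left
  by (rule sum.cong) (auto simp: prod_list_scale WI_def weak_idx_def)

lemma LI_Suc: "LI N (Suc k) = (\<lambda>(x,xs). x # xs) ` ({1..N} \<times> LI N k)"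
proof
  show "LI N (Suc k) \<subseteq> (\<lambda>(x,xs). x # xs) ` ({1..N} \<times> LI N k)"
  proof
    fix xs assume xs: "xs \<in> LI N (Suc k)"
    then obtain y ys where "xs = y # ys" by (cases xs) (auto simp: LI_def)
    with xs show "xs \<in> (\<lambda>(x,xs). x # xs) ` ({1..N} \<times> LI N k)"
      by (auto simp: LI_def intro!: image_eqI[where x="(y,ys)"])
  qed
qed (auto simp: LI_def)

lemma LI_sum: fixes v :: "nat \<Rightarrow> real" shows "(\<Sum>ns\<in>LI N k. \<Prod>n\<leftarrow>ns. v n) = (\<Sum>n=1..N. v n) ^ k"
proof (induction k)
  case 0
  have "LI N 0 = {[]}" by (auto simp: LI_def)
  then show ?case by simp
next
  case (Suc k)
  have inj: "inj_on (\<lambda>(x,xs). x # xs) ({1..N} \<times> LI N k)" by (auto simp: inj_on_def)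
  have "(\<Sum>ns\<in>LI N (Suc k). \<Prod>n\<leftarrow>ns. v n) = (\<Sum>(x,xs)\<in>{1..N} \<times> LI N k. v x * (\<Prod>n\<leftarrow>xs. v n))"
    unfolding LI_Suc by (subst sum.reindex[OF inj]) (simp add: case_prod_unfold)
  also have "\<dots> = (\<Sum>x\<in>{1..N}. \<Sum>xs\<in>LI N k. v x * (\<Prod>n\<leftarrow>xs. v n))"
    by (rule sum.cartesian_product[symmetric])
  also have "\<dots> = (\<Sum>n=1..N. v n) * (\<Sum>ns\<in>LI N k. \<Prod>n\<leftarrow>ns. v n)"
    by (rule sum_product[symmetric])
  finally show ?case using Suc by simp
qed


definition EP :: "(nat \<Rightarrow> real) \<Rightarrow> nat \<Rightarrow> real fps" where
  "EP v N = (\<Prod>n=1..N. 1 + fps_const (v n) * fps_X)"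
definition HP :: "(nat \<Rightarrow> real) \<Rightarrow> nat \<Rightarrow> real fps" where
  "HP v N = (\<Prod>n=1..N. inverse (1 - fps_const (v n) * fps_X))"

lemma EP_Suc: "EP v (Suc N) = EP v N * (1 + fps_const (v (Suc N)) * fps_X)"
  unfolding EP_def by (rule prod.nat_ivl_Suc'[THEN trans]) (simp_all only: mult.commute le_SucI One_nat_def Suc_le_mono le0)
lemma HP_Suc: "HP v (Suc N) = HP v N * inverse (1 - fps_const (v (Suc N)) * fps_X)"
  unfolding HP_def by (rule prod.nat_ivl_Suc'[THEN trans]) (simp_all only: mult.commute le_SucI One_nat_def Suc_le_mono le0)
lemma ring1: "f * (1 + C * X) = f + C * (X * f)" for f C X :: "'a::comm_ring_1"
  by (simp add: algebra_simps)
lemma ring2: "g * (1 - C * X) = g - C * (X * g)" for g C X :: "'a::comm_ring_1"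
  by (simp add: algebra_simps)
lemma ring3: "A * B * C * D = (A * C) * (B * D)" for A B C D :: "'a::comm_ring_1"
  by (simp add: mult_ac)

lemma EP_nth: "EP v N $ k = Ef v N k"
proof (induction N arbitrary: k)
  case 0
  have "EP v 0 = 1" by (simp add: EP_def)
  then show ?case by (cases k) (simp_all add: Ef_0 Ef_0S)
next
  case (Suc N)
  have "EP v (Suc N) = EP v N + fps_const (v (Suc N)) * (fps_X * EP v N)"
    by (simp only: EP_Suc ring1)
  then have E: "EP v (Suc N) $ k = EP v N $ k + v (Suc N) * (if k = 0 then 0 else EP v N $ (k - 1))"
    by (simp only: fps_add_nth fps_mult_left_const_nth fps_X_mult_nth)
  note IH = Suc.IH
  show ?case
  proof (cases k)
    case 0
    then show ?thesis using E IH[of 0] by (simp add: Ef_0)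
  next
    case (Suc m)
    then show ?thesis using E IH[of m] IH[of "Suc m"] by (simp add: Ef_Suc)
  qed
qed

lemma HP_Suc': "HP v (Suc N) * (1 - fps_const (v (Suc N)) * fps_X) = HP v N"
proof -
  have nz: "(1 - fps_const (v (Suc N)) * fps_X) $ 0 \<noteq> 0" by simp
  have "inverse (1 - fps_const (v (Suc N)) * fps_X) * (1 - fps_const (v (Suc N)) * fps_X) = 1"
    by (rule inverse_mult_eq_1[OF nz])
  then show ?thesis by (simp only: HP_Suc mult.assoc mult_1_right)
qed

lemma HP_nth: "HP v N $ k = Hf v N k"
proof (induction N arbitrary: k)
  case 0
  have "HP v 0 = 1" by (simp add: HP_def)
  then show ?case by (cases k) (simp_all add: Hf_0 Hf_0S)
next
  case (Suc N)
  define g where "g = HP v (Suc N)"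
  have gd: "g - fps_const (v (Suc N)) * (fps_X * g) = HP v N"
    using HP_Suc'[of v N] unfolding g_def by (simp only: ring2)
  have eq: "g $ k - v (Suc N) * (if k = 0 then 0 else g $ (k - 1)) = Hf v N k" for k
  proof -
    have "(g - fps_const (v (Suc N)) * (fps_X * g)) $ k = HP v N $ k" by (simp only: gd)
    then show ?thesis by (simp only: fps_sub_nth fps_mult_left_const_nth fps_X_mult_nth Suc.IH)
  qed
  show ?case unfolding g_def[symmetric]
  proof (induction k)
    case 0
    then show ?case using eq[of 0] by (simp add: Hf_0)
  next
    case (Suc k)
    then show ?case using eq[of "Suc k"] by (simp add: Hf_Suc)
  qed
qed

lemma EP_split:
  assumes "\<And>m. m \<ge> 1 \<Longrightarrow> w (2*m-1) = u m" "\<And>m. w (2*m) = a * w m"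
  shows "EP w (2*N) = EP u N * EP (\<lambda>n. a * w n) N"
proof (induction N)
  case 0
  then show ?case by (simp add: EP_def)
next
  case (Suc N)
  have e: "2 * Suc N = Suc (Suc (2*N))" by simp
  have w1: "w (Suc (2*N)) = u (Suc N)" using assms(1)[of "Suc N"] by simp
  have w2: "w (Suc (Suc (2*N))) = a * w (Suc N)" using assms(2)[of "Suc N"] by (simp only: e)
  have "EP w (2 * Suc N) = EP w (2*N) * (1 + fps_const (w (Suc (2*N))) * fps_X)
          * (1 + fps_const (w (Suc (Suc (2*N)))) * fps_X)"
    by (simp only: e EP_Suc)
  also have "\<dots> = EP u N * EP (\<lambda>n. a * w n) N * (1 + fps_const (u (Suc N)) * fps_X)
          * (1 + fps_const (a * w (Suc N)) * fps_X)"
    by (simp only: Suc.IH w1 w2)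
  also have "\<dots> = EP u (Suc N) * EP (\<lambda>n. a * w n) (Suc N)"
    by (simp only: EP_Suc ring3)
  finally show ?case .
qed

lemma HP_split:
  assumes "\<And>m. m \<ge> 1 \<Longrightarrow> w (2*m-1) = u m" "\<And>m. w (2*m) = a * w m"
  shows "HP w (2*N) = HP u N * HP (\<lambda>n. a * w n) N"
proof (induction N)
  case 0
  then show ?case by (simp add: HP_def)
next
  case (Suc N)
  have e: "2 * Suc N = Suc (Suc (2*N))" by simp
  have w1: "w (Suc (2*N)) = u (Suc N)" using assms(1)[of "Suc N"] by simp
  have w2: "w (Suc (Suc (2*N))) = a * w (Suc N)" using assms(2)[of "Suc N"] by (simp only: e)
  have "HP w (2 * Suc N) = HP w (2*N) * inverse (1 - fps_const (w (Suc (2*N))) * fps_X)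
          * inverse (1 - fps_const (w (Suc (Suc (2*N)))) * fps_X)"
    by (simp only: e HP_Suc)
  also have "\<dots> = HP u N * HP (\<lambda>n. a * w n) N * inverse (1 - fps_const (u (Suc N)) * fps_X)
          * inverse (1 - fps_const (a * w (Suc N)) * fps_X)"
    by (simp only: Suc.IH w1 w2)
  also have "\<dots> = HP u (Suc N) * HP (\<lambda>n. a * w n) (Suc N)"
    by (simp only: HP_Suc ring3)
  finally show ?case .
qed

lemma EP_HP: "EP v N * HP (\<lambda>n. - v n) N = 1"
proof -
  have "EP v N * HP (\<lambda>n. - v n) N =
     (\<Prod>n=1..N. (1 + fps_const (v n) * fps_X) * inverse (1 - fps_const (- v n) * fps_X))"
    unfolding EP_def HP_def prod.distrib ..
  also have "\<dots> = 1"
  proof (rule prod.neutral, rule ballI)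
    fix n
    have e1: "1 - fps_const (- v n) * fps_X = 1 + fps_const (v n) * fps_X"
      by (simp only: fps_const_neg[symmetric] mult_minus_left diff_minus_eq_add)
    have nz: "(1 + fps_const (v n) * fps_X) $ 0 \<noteq> 0" by simp
    have e2: "(1 + fps_const (v n) * fps_X) * inverse (1 + fps_const (v n) * fps_X) = 1"
      by (rule inverse_mult_eq_1'[OF nz])
    show "(1 + fps_const (v n) * fps_X) * inverse (1 - fps_const (- v n) * fps_X) = 1"
      unfolding e1 by (rule e2)
  qed
  finally show ?thesis .
qed

lemma HP_EP: "HP v N * EP (\<lambda>n. - v n) N = 1"
  using EP_HP[of "\<lambda>n. - v n" N] by (simp only: mult.commute minus_minus)

lemma Hf_nscale: "Hf (\<lambda>n. - (a * w n)) N k = (-a) ^ k * Hf w N k"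
  using Hf_scale[of "-a" w N k] by simp
lemma Ef_nscale: "Ef (\<lambda>n. - (a * w n)) N k = (-a) ^ k * Ef w N k"
  using Ef_scale[of "-a" w N k] by simp

lemma fin1:
  assumes "\<And>m. m \<ge> 1 \<Longrightarrow> w (2*m-1) = u m" "\<And>m. w (2*m) = a * w m"
  shows "Ef u N r = (\<Sum>i=0..r. Ef w (2*N) i * ((-a) ^ (r-i) * Hf w N (r-i)))"
proof -
  have "EP u N = EP u N * (EP (\<lambda>n. a * w n) N * HP (\<lambda>n. - (a * w n)) N)"
    by (simp only: EP_HP mult_1_right)
  also have "\<dots> = EP w (2*N) * HP (\<lambda>n. - (a * w n)) N"
    by (simp only: EP_split[OF assms] mult.assoc)
  finally have "EP u N $ r = (EP w (2*N) * HP (\<lambda>n. - (a * w n)) N) $ r" by (rule arg_cong)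
  then show ?thesis by (simp only: fps_mult_nth EP_nth HP_nth Hf_nscale)
qed

lemma fin2:
  assumes "\<And>m. m \<ge> 1 \<Longrightarrow> w (2*m-1) = u m" "\<And>m. w (2*m) = a * w m"
  shows "Hf u N r = (\<Sum>i=0..r. Hf w (2*N) i * ((-a) ^ (r-i) * Ef w N (r-i)))"
proof -
  have "HP u N = HP u N * (HP (\<lambda>n. a * w n) N * EP (\<lambda>n. - (a * w n)) N)"
    by (simp only: HP_EP mult_1_right)
  also have "\<dots> = HP w (2*N) * EP (\<lambda>n. - (a * w n)) N"
    by (simp only: HP_split[OF assms] mult.assoc)
  finally have "HP u N $ r = (HP w (2*N) * EP (\<lambda>n. - (a * w n)) N) $ r" by (rule arg_cong)
  then show ?thesis by (simp only: fps_mult_nth EP_nth HP_nth Ef_nscale)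
qed


lemma tendsto_exhaust:
  fixes f :: "'a \<Rightarrow> real"
  assumes sm: "f summable_on A" and fin: "\<And>N. finite (B N)" and sub: "\<And>N. B N \<subseteq> A"
    and ex: "\<And>F. finite F \<Longrightarrow> F \<subseteq> A \<Longrightarrow> \<exists>M. \<forall>N\<ge>M. F \<subseteq> B N"
  shows "(\<lambda>N. sum f (B N)) \<longlonglongrightarrow> infsum f A"
proof -
  have hs: "(sum f \<longlongrightarrow> infsum f A) (finite_subsets_at_top A)"
    using sm unfolding summable_iff_has_sum_infsum has_sum_def .
  have fl: "filterlim B (finite_subsets_at_top A) sequentially"
    unfolding filterlim_iff
  proof (intro allI impI)
    fix P assume "eventually P (finite_subsets_at_top A)"
    then obtain X where X: "finite X" "X \<subseteq> A" "\<forall>Y. finite Y \<and> X \<subseteq> Y \<and> Y \<subseteq> A \<longrightarrow> P Y"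
      unfolding eventually_finite_subsets_at_top by (elim exE conjE) (rule that)
    obtain M where M: "\<forall>N\<ge>M. X \<subseteq> B N" using ex[OF X(1,2)] by (elim exE) (rule that)
    have "\<forall>N\<ge>M. P (B N)"
    proof (intro allI impI)
      fix N assume "M \<le> N"
      then have "X \<subseteq> B N" using M by simp
      then show "P (B N)" using X(3) fin[of N] sub[of N] by simp
    qed
    then show "eventually (\<lambda>N. P (B N)) sequentially"
      unfolding eventually_sequentially by (rule exI)
  qed
  show ?thesis using filterlim_compose[OF hs fl] .
qed

lemma exhaust_W:
  assumes "finite F" "F \<subseteq> weak_idx k"
  shows "\<exists>M. \<forall>N\<ge>M. F \<subseteq> WI N k"
proof -
  define M where "M = Max (insert 0 (\<Union>ns\<in>F. set ns))"
  have fM: "finite (insert 0 (\<Union>ns\<in>F. set ns))" using assms(1) by simp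
  have "\<forall>N\<ge>M. F \<subseteq> WI N k"
  proof (intro allI impI subsetI)
    fix N ns assume N: "M \<le> N" and ns: "ns \<in> F"
    have "\<forall>n\<in>set ns. n \<le> M" unfolding M_def using ns Max_ge[OF fM] by blast
    then show "ns \<in> WI N k" using ns assms(2) N unfolding WI_def by force
  qed
  then show ?thesis by blast
qed

lemma strict_sub_weak: "strict_idx k \<subseteq> weak_idx k"
  unfolding strict_idx_def weak_idx_def by (auto elim: sorted_wrt_mono_rel[rotated])

lemma exhaust_S:
  assumes "finite F" "F \<subseteq> strict_idx k"
  shows "\<exists>M. \<forall>N\<ge>M. F \<subseteq> SI N k"
proof -
  obtain M where M: "\<forall>N\<ge>M. F \<subseteq> WI N k" using exhaust_W[OF assms(1)] assms(2) strict_sub_weak by blast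
  have "\<forall>N\<ge>M. F \<subseteq> SI N k" using M assms(2) unfolding WI_def SI_def by blast
  then show ?thesis by blast
qed

lemma pl_nonneg: "(\<And>n. 0 \<le> v n) \<Longrightarrow> 0 \<le> (\<Prod>n\<leftarrow>ns. v n :: real)"
  by (rule prod_list_nonneg) auto

lemma summable_W:
  fixes v :: "nat \<Rightarrow> real"
  assumes nn: "\<And>n. 0 \<le> v n" and bd: "\<And>N. sum v {1..N} \<le> Z"
  shows "(\<lambda>ns. \<Prod>n\<leftarrow>ns. v n) summable_on weak_idx k"
proof (rule nonneg_bdd_above_summable_on)
  show "0 \<le> (\<Prod>n\<leftarrow>ns. v n)" for ns using pl_nonneg nn by blast
  show "bdd_above ((\<lambda>F. \<Sum>ns\<in>F. \<Prod>n\<leftarrow>ns. v n) ` {F. F \<subseteq> weak_idx k \<and> finite F})"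
  proof (rule bdd_aboveI2)
    fix F assume F: "F \<in> {F. F \<subseteq> weak_idx k \<and> finite F}"
    then have Ff: "finite F" "F \<subseteq> weak_idx k" by auto
    obtain M0 where M0: "\<forall>N\<ge>M0. F \<subseteq> WI N k" using exhaust_W[OF Ff] by (elim exE) (rule that)
    then have M: "F \<subseteq> WI M0 k" by simp
    have "(\<Sum>ns\<in>F. \<Prod>n\<leftarrow>ns. v n) \<le> (\<Sum>ns\<in>LI M0 k. \<Prod>n\<leftarrow>ns. v n)"
      using M WI_LI by (intro sum_mono2) (auto simp: LI_finite pl_nonneg nn)
    also have "\<dots> = (sum v {1..M0}) ^ k" by (rule LI_sum)
    also have "\<dots> \<le> Z ^ k" by (intro power_mono bd sum_nonneg nn)
    finally show "(\<Sum>ns\<in>F. \<Prod>n\<leftarrow>ns. v n) \<le> Z ^ k" .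
  qed
qed

lemma summable_S:
  fixes v :: "nat \<Rightarrow> real"
  assumes nn: "\<And>n. 0 \<le> v n" and bd: "\<And>N. sum v {1..N} \<le> Z"
  shows "(\<lambda>ns. \<Prod>n\<leftarrow>ns. v n) summable_on strict_idx k"
  using summable_on_subset_banach[OF summable_W[OF nn bd] strict_sub_weak] .

lemma lim_E:
  fixes v :: "nat \<Rightarrow> real"
  assumes nn: "\<And>n. 0 \<le> v n" and bd: "\<And>N. sum v {1..N} \<le> Z" and g: "filterlim g sequentially sequentially"
  shows "(\<lambda>N. Ef v (g N) k) \<longlonglongrightarrow> (\<Sum>\<^sub>\<infinity> ns \<in> strict_idx k. \<Prod>n\<leftarrow>ns. v n)"
  unfolding Ef_def
proof (rule tendsto_exhaust[OF summable_S[OF nn bd]])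
  show "finite (SI (g N) k)" for N by (rule SI_finite)
  show "SI (g N) k \<subseteq> strict_idx k" for N by (auto simp: SI_def)
  fix F assume "finite F" "F \<subseteq> strict_idx k"
  then obtain M where M: "\<forall>N\<ge>M. F \<subseteq> SI N k" using exhaust_S by blast
  have "eventually (\<lambda>N. g N \<ge> M) sequentially" using g unfolding filterlim_at_top by blast
  then obtain M' where M': "\<forall>N\<ge>M'. g N \<ge> M" unfolding eventually_sequentially by blast
  have "\<forall>N\<ge>M'. F \<subseteq> SI (g N) k" using M M' by simp
  then show "\<exists>M. \<forall>N\<ge>M. F \<subseteq> SI (g N) k" by (rule exI)
qed

lemma lim_H:
  fixes v :: "nat \<Rightarrow> real"
  assumes nn: "\<And>n. 0 \<le> v n" and bd: "\<And>N. sum v {1..N} \<le> Z" and g: "filterlim g sequentially sequentially"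
  shows "(\<lambda>N. Hf v (g N) k) \<longlonglongrightarrow> (\<Sum>\<^sub>\<infinity> ns \<in> weak_idx k. \<Prod>n\<leftarrow>ns. v n)"
  unfolding Hf_def
proof (rule tendsto_exhaust[OF summable_W[OF nn bd]])
  show "finite (WI (g N) k)" for N by (rule WI_finite)
  show "WI (g N) k \<subseteq> weak_idx k" for N by (auto simp: WI_def)
  fix F assume "finite F" "F \<subseteq> weak_idx k"
  then obtain M where M: "\<forall>N\<ge>M. F \<subseteq> WI N k" using exhaust_W by blast
  have "eventually (\<lambda>N. g N \<ge> M) sequentially" using g unfolding filterlim_at_top by blast
  then obtain M' where M': "\<forall>N\<ge>M'. g N \<ge> M" unfolding eventually_sequentially by blast
  have "\<forall>N\<ge>M'. F \<subseteq> WI (g N) k" using M M' by simp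
  then show "\<exists>M. \<forall>N\<ge>M. F \<subseteq> WI (g N) k" by (rule exI)
qed


lemma coef: "(- (2 powr (-s))) ^ k = (-1) ^ k / 2 powr (real k * s)"
proof -
  have "(2 powr (-s)) ^ k = (2 powr (-s)) powr real k" by (rule powr_realpow[symmetric]) simp
  also have "\<dots> = 2 powr (- (real k * s))" by (simp add: powr_powr mult.commute)
  also have "\<dots> = inverse (2 powr (real k * s))" by (rule powr_minus)
  finally have i: "(2 powr (-s)) ^ k = inverse (2 powr (real k * s))" .
  show ?thesis unfolding power_minus[of "2 powr (-s)"] i divide_inverse ..
qed

theorem theorem1p4:
  fixes r :: nat and s :: real
  assumes "r \<ge> 1" and "s > 1"
  shows "mt r s = (\<Sum>j=0..r. (-1) ^ (r - j) / 2 powr (real (r - j) * s)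
                      * mzeta j s * mzeta_star (r - j) s) \<and>
         mt_star r s = (\<Sum>j=0..r. (-1) ^ (r - j) / 2 powr (real (r - j) * s)
                      * mzeta (r - j) s * mzeta_star j s)"
proof -
  define w where "w = (\<lambda>n::nat. real n powr (-s))"
  define u where "u = (\<lambda>n::nat. (2 * real n - 1) powr (-s))"
  define a where "a = (2::real) powr (-s)"
  have hw1: "w (2*m-1) = u m" if "m \<ge> 1" for m
  proof -
    have "real (2*m-1) = 2 * real m - 1" using that by (simp add: of_nat_diff)
    then show ?thesis by (simp add: w_def u_def)
  qed
  have hw2: "w (2*m) = a * w m" for m
    by (simp add: w_def a_def powr_mult)
  have wnn: "0 \<le> w n" for n by (simp add: w_def)
  have unn: "0 \<le> u n" for n by (simp add: u_def)
  have sw: "summable w" unfolding w_def using assms(2) by (simp add: summable_real_powr_iff)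
  have bw: "sum w {1..N} \<le> suminf w" for N
    by (rule sum_le_suminf[OF sw]) (simp_all add: wnn)
  have uw: "u n \<le> w n" if "n \<in> {1..N}" for n N
  proof -
    have "real n \<ge> 1" using that by simp
    then have "0 < real n" "real n \<le> 2 * real n - 1" by simp_all
    then show ?thesis unfolding u_def w_def using assms(2) by (intro powr_mono2') simp_all
  qed
  have bu: "sum u {1..N} \<le> suminf w" for N
  proof -
    have "sum u {1..N} \<le> sum w {1..N}" by (rule sum_mono) (rule uw)
    then show ?thesis using bw[of N] by linarith
  qed
  have g2: "filterlim (\<lambda>N::nat. 2*N) sequentially sequentially"
    by (rule filterlim_subseq) (auto simp: strict_mono_def)
  have mtd: "mt k s = (\<Sum>\<^sub>\<infinity> ns \<in> strict_idx k. \<Prod>n\<leftarrow>ns. u n)" for k unfolding mt_def u_def ..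
  have mtsd: "mt_star k s = (\<Sum>\<^sub>\<infinity> ns \<in> weak_idx k. \<Prod>n\<leftarrow>ns. u n)" for k unfolding mt_star_def u_def ..
  have mzd: "mzeta k s = (\<Sum>\<^sub>\<infinity> ns \<in> strict_idx k. \<Prod>n\<leftarrow>ns. w n)" for k unfolding mzeta_def w_def ..
  have mzsd: "mzeta_star k s = (\<Sum>\<^sub>\<infinity> ns \<in> weak_idx k. \<Prod>n\<leftarrow>ns. w n)" for k unfolding mzeta_star_def w_def ..
  have LEu: "(\<lambda>N. Ef u N k) \<longlonglongrightarrow> mt k s" for k
    unfolding mtd using lim_E[OF unn bu filterlim_ident] .
  have LHu: "(\<lambda>N. Hf u N k) \<longlonglongrightarrow> mt_star k s" for k
    unfolding mtsd using lim_H[OF unn bu filterlim_ident] .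
  have LEw: "(\<lambda>N. Ef w N k) \<longlonglongrightarrow> mzeta k s" for k
    unfolding mzd using lim_E[OF wnn bw filterlim_ident] .
  have LHw: "(\<lambda>N. Hf w N k) \<longlonglongrightarrow> mzeta_star k s" for k
    unfolding mzsd using lim_H[OF wnn bw filterlim_ident] .
  have LEw2: "(\<lambda>N. Ef w (2*N) k) \<longlonglongrightarrow> mzeta k s" for k
    unfolding mzd using lim_E[OF wnn bw g2] .
  have LHw2: "(\<lambda>N. Hf w (2*N) k) \<longlonglongrightarrow> mzeta_star k s" for k
    unfolding mzsd using lim_H[OF wnn bw g2] .
  have R1: "(\<lambda>N. \<Sum>i=0..r. Ef w (2*N) i * ((-a) ^ (r-i) * Hf w N (r-i)))
      \<longlonglongrightarrow> (\<Sum>i=0..r. mzeta i s * ((-a) ^ (r-i) * mzeta_star (r-i) s))"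
    by (intro tendsto_sum tendsto_mult tendsto_const LEw2 LHw)
  have R2: "(\<lambda>N. \<Sum>i=0..r. Hf w (2*N) i * ((-a) ^ (r-i) * Ef w N (r-i)))
      \<longlonglongrightarrow> (\<Sum>i=0..r. mzeta_star i s * ((-a) ^ (r-i) * mzeta (r-i) s))"
    by (intro tendsto_sum tendsto_mult tendsto_const LHw2 LEw)
  have F1: "Ef u N r = (\<Sum>i=0..r. Ef w (2*N) i * ((-a) ^ (r-i) * Hf w N (r-i)))" for N
    by (rule fin1[OF hw1 hw2])
  have F2: "Hf u N r = (\<Sum>i=0..r. Hf w (2*N) i * ((-a) ^ (r-i) * Ef w N (r-i)))" for N
    by (rule fin2[OF hw1 hw2])
  have E1: "mt r s = (\<Sum>i=0..r. mzeta i s * ((-a) ^ (r-i) * mzeta_star (r-i) s))"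
    using LIMSEQ_unique[OF LEu R1[folded F1]] .
  have E2: "mt_star r s = (\<Sum>i=0..r. mzeta_star i s * ((-a) ^ (r-i) * mzeta (r-i) s))"
    using LIMSEQ_unique[OF LHu R2[folded F2]] .
  have ca: "(-a) ^ k = (-1) ^ k / 2 powr (real k * s)" for k unfolding a_def by (rule coef)
  show ?thesis
  proof
    show "mt r s = (\<Sum>j=0..r. (-1) ^ (r - j) / 2 powr (real (r - j) * s)
                      * mzeta j s * mzeta_star (r - j) s)"
      unfolding E1 by (rule sum.cong) (simp_all add: ca)
    show "mt_star r s = (\<Sum>j=0..r. (-1) ^ (r - j) / 2 powr (real (r - j) * s)
                      * mzeta (r - j) s * mzeta_star j s)"
      unfolding E2 by (rule sum.cong) (simp_all add: ca)
  qed
qed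

end
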